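(* Let $\Sigma$ be an alphabet, $\triangleleft\notin\Sigma$, and let $L\subseteq\Sigma^*$ be a context-free language all of whose strings have length at least $2$. Then there exists a pop-normalized MPDA $\mathcal A$ with $L(\mathcal A)=\mathrm{Next}(L)$.
   Context: $\mathrm{Next}(L)=\bigcup_{n\in\mathbb N}\{\langle\sigma_2,\sigma_1\rangle\cdots\langle\sigma_n,\sigma_{n-1}\rangle\langle\triangleleft,\sigma_n\rangle\mid\sigma_1,\dots,\sigma_n\in\Sigma,\ \sigma_1\cdots\sigma_n\in L\}$, a language over $(\Sigma\cup\{\triangleleft\})\times\Sigma$. A Moore push-down automaton (MPDA) is $\mathcal A=(Q,\Delta,\Gamma,\delta,\tau,I,F)$ with finite sets $Q$ (states), $\Delta$ (input symbols), $\Gamma$ (stack symbols), transitions $\delta\subseteq(Q\times\Gamma^{\le1}\times\Gamma^{\le1}\times Q)\setminus(Q\times\Gamma\times\Gamma\times Q)$ with $\Gamma^{\le1}=\{\varepsilon\}\cup\Gamma$, output function $\tau:Q\to\Delta$, and $I,F\subseteq Q$. Configurations $\langle q,\alpha\rangle\in Q\times\Gamma^*$; moves $\langle q,\gamma\alpha\rangle\vdash\langle q',\gamma'\alpha\rangle$ for $(q,\gamma,\gamma',q')\in\delta$ whenever $\gamma\alpha\ne\varepsilon$. Initial configurations: $q\in I$, $\alpha\in\Gamma$; final: $q\in F$, $\alpha=\varepsilon$. $L(\mathcal A)$ is the set of $\tau(q_0)\cdots\tau(q_n)$ for runs $\langle q_0,\alpha_0\rangle\vdash\cdots\vdash\langle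 q_n,\alpha_n\rangle$ from an initial to a final configuration. Pop-normalized: there is $\mathrm{return}:\Gamma\to Q$ with $q'=\mathrm{return}(\gamma)$ for every $(q,\gamma,\varepsilon,q')\in\delta$, $\gamma\in\Gamma$. *)

theory Defs
  imports Main
begin

text \<open>A grammar: productions (A, alpha) with nonterminals of type nat, right-hand sides
  over nonterminals (Inl) and terminals (Inr).\<close>

type_synonym 'a cfg_prods = "(nat \<times> (nat + 'a) list) set"

definition cfg_step :: "'a cfg_prods \<Rightarrow> (nat + 'a) list \<Rightarrow> (nat + 'a) list \<Rightarrow> bool" where
  "cfg_step P u v \<longleftrightarrow> (\<exists>l r A \<alpha>. (A, \<alpha>) \<in> P \<and> u = l @ [Inl A] @ r \<and> v = l @ \<alpha> @ r)"

definition cfg_lang :: "'a cfg_prods \<Rightarrow> nat \<Rightarrow> 'a list set" where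
  "cfg_lang P S = {w. (cfg_step P)\<^sup>*\<^sup>* [Inl S] (map Inr w)}"

definition context_free :: "'a set \<Rightarrow> 'a list set \<Rightarrow> bool" where
  "context_free \<Sigma> L \<longleftrightarrow>
     (\<exists>P S. finite P \<and> (\<forall>(A, \<alpha>) \<in> P. \<forall>x \<in> set \<alpha>. \<forall>a. x = Inr a \<longrightarrow> a \<in> \<Sigma>)
            \<and> L = cfg_lang P S)"

text \<open>For w = s1 ... sn, next_word tri w = (s2,s1) ... (sn,s(n-1)) (tri,sn).\<close>

definition next_word :: "'a \<Rightarrow> 'a list \<Rightarrow> ('a \<times> 'a) list" where
  "next_word tri w = zip (tl w @ [tri]) w"

definition Next :: "'a set \<Rightarrow> 'a \<Rightarrow> 'a list set \<Rightarrow> ('a \<times> 'a) list set" where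
  "Next \<Sigma> tri L = {next_word tri w | w. w \<in> L \<and> w \<in> lists \<Sigma> \<and> w \<noteq> []}"

text \<open>States and stack symbols are natural numbers; Gamma^{<=1} is rendered as option
  (None = epsilon).\<close>

record ('q, 'g, 'd) mpda =
  states :: "'q set"
  outputs :: "'d set"
  stack :: "'g set"
  trans :: "('q \<times> 'g option \<times> 'g option \<times> 'q) set"
  out :: "'q \<Rightarrow> 'd"
  initial :: "'q set"
  final :: "'q set"

definition opt_list :: "'g option \<Rightarrow> 'g list" where
  "opt_list x = (case x of None \<Rightarrow> [] | Some g \<Rightarrow> [g])"

definition mpda_wf :: "('q, 'g, 'd) mpda \<Rightarrow> bool" where
  "mpda_wf A \<longleftrightarrow> finite (states A) \<and> finite (outputs A) \<and> finite (stack A)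
     \<and> (\<forall>(q, \<gamma>, \<gamma>', q') \<in> trans A. q \<in> states A \<and> q' \<in> states A
          \<and> set_option \<gamma> \<subseteq> stack A \<and> set_option \<gamma>' \<subseteq> stack A
          \<and> \<not> (\<gamma> \<noteq> None \<and> \<gamma>' \<noteq> None))
     \<and> (\<forall>q \<in> states A. out A q \<in> outputs A)
     \<and> initial A \<subseteq> states A \<and> final A \<subseteq> states A"

definition mpda_move :: "('q, 'g, 'd) mpda \<Rightarrow> 'q \<times> 'g list \<Rightarrow> 'q \<times> 'g list \<Rightarrow> bool" where
  "mpda_move A c c' \<longleftrightarrow> (\<exists>\<gamma> \<gamma>' \<alpha>. (fst c, \<gamma>, \<gamma>', fst c') \<in> trans A
      \<and> snd c = opt_list \<gamma> @ \<alpha> \<and> snd c' = opt_list \<gamma>' @ \<alpha> \<and> snd c \<noteq> [])"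

definition mpda_run :: "('q, 'g, 'd) mpda \<Rightarrow> ('q \<times> 'g list) list \<Rightarrow> bool" where
  "mpda_run A cs \<longleftrightarrow> cs \<noteq> []
     \<and> fst (hd cs) \<in> initial A \<and> (\<exists>g \<in> stack A. snd (hd cs) = [g])
     \<and> fst (last cs) \<in> final A \<and> snd (last cs) = []
     \<and> (\<forall>i. Suc i < length cs \<longrightarrow> mpda_move A (cs ! i) (cs ! Suc i))"

definition mpda_lang :: "('q, 'g, 'd) mpda \<Rightarrow> 'd list set" where
  "mpda_lang A = {map (out A \<circ> fst) cs | cs. mpda_run A cs}"

definition pop_normalized :: "('q, 'g, 'd) mpda \<Rightarrow> bool" where
  "pop_normalized A \<longleftrightarrow> (\<exists>ret :: 'g \<Rightarrow> 'q. (\<forall>g \<in> stack A. ret g \<in> states A)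
     \<and> (\<forall>q g q'. (q, Some g, None, q') \<in> trans A \<longrightarrow> q' = ret g))"

end

theory Submission
  imports Defs
begin


inductive gen :: "'a cfg_prods \<Rightarrow> (nat + 'a) list \<Rightarrow> 'a list \<Rightarrow> bool" for P where
  gen_nil: "gen P [] []"
| gen_tm: "gen P xs w \<Longrightarrow> gen P (Inr a # xs) (a # w)"
| gen_nt: "(A, \<alpha>) \<in> P \<Longrightarrow> gen P \<alpha> u \<Longrightarrow> gen P xs v \<Longrightarrow> gen P (Inl A # xs) (u @ v)"

lemma gen_append_I: "gen P xs u \<Longrightarrow> gen P ys v' \<Longrightarrow> gen P (xs @ ys) (u @ v')"
proof (induction rule: gen.induct)
  case gen_nil
  then show ?case by simp
next
  case (gen_tm xs w a)
  then show ?case by (simp add: gen.gen_tm)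
next
  case (gen_nt A \<alpha> u xs v)
  have "gen P (Inl A # (xs @ ys)) (u @ (v @ v'))"
    by (rule gen.gen_nt) (use gen_nt in auto)
  then show ?case by simp
qed

lemma gen_append_D: "gen P (xs @ ys) w \<Longrightarrow> \<exists>u v. w = u @ v \<and> gen P xs u \<and> gen P ys v"
proof (induction xs arbitrary: w)
  case Nil
  then show ?case by (intro exI[of _ "[]"] exI[of _ w]) (simp add: gen_nil)
next
  case (Cons x xs)
  from Cons.prems show ?case
  proof (cases rule: gen.cases)
    case gen_nil
    then show ?thesis by simp
  next
    case (gen_tm xs' w' a)
    have "gen P (xs @ ys) w'" using gen_tm by simp
    with Cons.IH obtain u v where "w' = u @ v" "gen P xs u" "gen P ys v" by blast
    moreover have "gen P (x # xs) (a # u)" using gen_tm \<open>gen P xs u\<close> by (simp add: gen.gen_tm)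
    ultimately show ?thesis using gen_tm by (intro exI[of _ "a # u"] exI[of _ v]) simp
  next
    case (gen_nt A \<alpha> u' xs' v')
    have "gen P (xs @ ys) v'" using gen_nt by simp
    with Cons.IH obtain u v where "v' = u @ v" "gen P xs u" "gen P ys v" by blast
    moreover have "gen P (x # xs) (u' @ u)" using gen_nt \<open>gen P xs u\<close> by (simp add: gen.gen_nt)
    ultimately show ?thesis using gen_nt by (intro exI[of _ "u' @ u"] exI[of _ v]) simp
  qed
qed

lemma gen_append: "gen P (xs @ ys) w \<longleftrightarrow> (\<exists>u v. w = u @ v \<and> gen P xs u \<and> gen P ys v)"
  using gen_append_D gen_append_I by blast

lemma gen_tm_iff: "gen P [Inr a] w \<longleftrightarrow> w = [a]"
proof
  assume "gen P [Inr a] w"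
  then show "w = [a]"
    by (cases rule: gen.cases) (auto elim: gen.cases)
qed (simp add: gen_tm gen_nil)

lemma gen_nt_iff: "gen P [Inl A] w \<longleftrightarrow> (\<exists>\<alpha>. (A, \<alpha>) \<in> P \<and> gen P \<alpha> w)"
proof
  assume "gen P [Inl A] w"
  then show "\<exists>\<alpha>. (A, \<alpha>) \<in> P \<and> gen P \<alpha> w"
  proof (cases rule: gen.cases)
    case (gen_nt \<alpha> u v)
    then have "v = []" by (auto elim: gen.cases)
    then show ?thesis using gen_nt by auto
  qed
next
  assume "\<exists>\<alpha>. (A, \<alpha>) \<in> P \<and> gen P \<alpha> w"
  then show "gen P [Inl A] w" using gen_nt[OF _ _ gen_nil] by fastforce
qed

lemma gen_map_Inr: "gen P (map Inr w) w"
  by (induction w) (simp_all add: gen_nil gen_tm)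

lemma cfg_step_ctx: "cfg_step P u v \<Longrightarrow> cfg_step P (l @ u @ r) (l @ v @ r)"
proof -
  assume "cfg_step P u v"
  then obtain l' r' A \<alpha> where h: "(A, \<alpha>) \<in> P" "u = l' @ [Inl A] @ r'" "v = l' @ \<alpha> @ r'"
    unfolding cfg_step_def by blast
  show ?thesis unfolding cfg_step_def
    by (rule exI[of _ "l @ l'"], rule exI[of _ "r' @ r"]) (use h in auto)
qed

lemma cfg_steps_ctx: "(cfg_step P)\<^sup>*\<^sup>* u v \<Longrightarrow> (cfg_step P)\<^sup>*\<^sup>* (l @ u @ r) (l @ v @ r)"
proof (induction rule: rtranclp_induct)
  case base
  then show ?case by simp
next
  case (step y z)
  show ?case by (rule rtranclp.rtrancl_into_rtrancl[OF step.IH cfg_step_ctx[OF step.hyps(2)]])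
qed

lemma gen_imp_steps: "gen P xs w \<Longrightarrow> (cfg_step P)\<^sup>*\<^sup>* xs (map Inr w)"
proof (induction rule: gen.induct)
  case gen_nil
  then show ?case by simp
next
  case (gen_tm xs w a)
  then show ?case using cfg_steps_ctx[OF gen_tm.IH, of "[Inr a]" "[]"] by simp
next
  case (gen_nt A \<alpha> u xs v)
  have 1: "cfg_step P (Inl A # xs) (\<alpha> @ xs)"
    unfolding cfg_step_def
    by (rule exI[of _ "[]"], rule exI[of _ xs]) (use gen_nt.hyps(1) in auto)
  have 2: "(cfg_step P)\<^sup>*\<^sup>* (\<alpha> @ xs) (map Inr u @ xs)"
    using cfg_steps_ctx[OF gen_nt.IH(1), of "[]" xs] by simp
  have 3: "(cfg_step P)\<^sup>*\<^sup>* (map Inr u @ xs) (map Inr u @ map Inr v)"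
    using cfg_steps_ctx[OF gen_nt.IH(2), of "map Inr u" "[]"] by simp
  show ?case using 1 2 3 by simp
qed

lemma step_gen: "cfg_step P u v \<Longrightarrow> gen P v w \<Longrightarrow> gen P u w"
proof -
  assume "cfg_step P u v" "gen P v w"
  then obtain l r A \<alpha> where h: "(A, \<alpha>) \<in> P" "u = l @ [Inl A] @ r" "v = l @ \<alpha> @ r"
    unfolding cfg_step_def by blast
  from \<open>gen P v w\<close> h obtain w1 w23 where "w = w1 @ w23" "gen P l w1" "gen P (\<alpha> @ r) w23"
    using gen_append by blast
  moreover then obtain w2 w3 where "w23 = w2 @ w3" "gen P \<alpha> w2" "gen P r w3"
    using gen_append by blast
  ultimately have "gen P ([Inl A] @ r) (w2 @ w3)" using gen_nt[OF h(1)] by simp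
  from gen_append_I[OF \<open>gen P l w1\<close> this] show ?thesis
    using h(2) \<open>w = w1 @ w23\<close> \<open>w23 = w2 @ w3\<close> by simp
qed

lemma steps_gen: "(cfg_step P)\<^sup>*\<^sup>* u v \<Longrightarrow> gen P v w \<Longrightarrow> gen P u w"
  by (induction rule: converse_rtranclp_induct) (auto intro: step_gen)

lemma cfg_lang_gen: "cfg_lang P S = {w. gen P [Inl S] w}"
proof (intro set_eqI iffI)
  fix w assume "w \<in> cfg_lang P S"
  then show "w \<in> {w. gen P [Inl S] w}"
    unfolding cfg_lang_def using steps_gen[OF _ gen_map_Inr] by simp
next
  fix w assume "w \<in> {w. gen P [Inl S] w}"
  then show "w \<in> cfg_lang P S"
    unfolding cfg_lang_def using gen_imp_steps by simp
qed



inductive lc :: "'a cfg_prods \<Rightarrow> (nat + 'a) \<Rightarrow> (nat + 'a) \<Rightarrow> 'a list \<Rightarrow> bool" for P where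
  lc_refl: "lc P Z Z []"
| lc_step: "(D, \<alpha> @ X # \<beta>) \<in> P \<Longrightarrow> gen P \<alpha> [] \<Longrightarrow> gen P \<beta> u \<Longrightarrow> lc P Z (Inl D) v
     \<Longrightarrow> lc P Z X (u @ v)"

lemma gen_split_I: "gen P xs1 [] \<Longrightarrow> gen P [Y] y \<Longrightarrow> gen P xs2 w \<Longrightarrow> gen P (xs1 @ Y # xs2) (y @ w)"
  using gen_append_I[of P xs1 "[]" "[Y] @ xs2" "y @ w"] gen_append_I[of P "[Y]" y xs2 w] by simp

lemma gen_nil_D: "gen P [] w \<Longrightarrow> w = []"
  by (cases rule: gen.cases) auto

lemma lc_gen: "lc P Z X v \<Longrightarrow> gen P [X] u \<Longrightarrow> gen P [Z] (u @ v)"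
proof (induction arbitrary: u rule: lc.induct)
  case (lc_refl Z)
  then show ?case by simp
next
  case (lc_step D \<alpha> X \<beta> u1 Z v)
  have "gen P (\<alpha> @ X # \<beta>) (u @ u1)"
    by (rule gen_split_I) (use lc_step in auto)
  then have "gen P [Inl D] (u @ u1)" using gen_nt_iff lc_step.hyps(1) by metis
  then have "gen P [Z] ((u @ u1) @ v)" by (rule lc_step.IH)
  then show ?case by simp
qed

lemma lc_trans: "lc P Y X v1 \<Longrightarrow> lc P Z Y v2 \<Longrightarrow> lc P Z X (v1 @ v2)"
proof (induction rule: lc.induct)
  case (lc_refl Z)
  then show ?case by simp
next
  case (lc_step D \<alpha> X \<beta> u1 Y v)
  have "lc P Z (Inl D) (v @ v2)" by (rule lc_step.IH[OF lc_step.prems])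
  from lc.lc_step[OF lc_step.hyps(1,2,3) this] show ?case by simp
qed

lemma gen_first: "gen P xs w \<Longrightarrow> w = a # w' \<Longrightarrow>
  \<exists>xs1 Y xs2 y w2. xs = xs1 @ Y # xs2 \<and> gen P xs1 [] \<and> lc P Y (Inr a) y \<and> gen P xs2 w2 \<and> w' = y @ w2"
proof (induction arbitrary: w' rule: gen.induct)
  case gen_nil
  then show ?case by simp
next
  case (gen_tm xs w b)
  then have "b = a" "w = w'" by auto
  then show ?case using gen_tm.hyps gen_nil lc_refl[of P "Inr a"]
    by (intro exI[of _ "[]"] exI[of _ "Inr a"] exI[of _ xs] exI[of _ "[]"] exI[of _ w]) simp
next
  case (gen_nt A \<alpha> u xs v)
  show ?case
  proof (cases u)
    case Nil
    then have "v = a # w'" using gen_nt.prems by simp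
    from gen_nt.IH(2)[OF this] obtain xs1 Y xs2 y w2 where
      h: "xs = xs1 @ Y # xs2" "gen P xs1 []" "lc P Y (Inr a) y" "gen P xs2 w2" "w' = y @ w2"
      by blast
    have "gen P (Inl A # xs1) ([] @ [])"
      by (rule gen.gen_nt[OF gen_nt.hyps(1)]) (use gen_nt.hyps(2) Nil h in auto)
    then show ?thesis using h
      by (intro exI[of _ "Inl A # xs1"] exI[of _ Y] exI[of _ xs2] exI[of _ y] exI[of _ w2]) simp
  next
    case (Cons b u')
    then have "b = a" and w': "w' = u' @ v" using gen_nt.prems by auto
    with Cons have "u = a # u'" by simp
    from gen_nt.IH(1)[OF this] obtain xs1 Y xs2 y w2 where
      h: "\<alpha> = xs1 @ Y # xs2" "gen P xs1 []" "lc P Y (Inr a) y" "gen P xs2 w2" "u' = y @ w2"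
      by blast
    have "lc P (Inl A) Y (w2 @ [])"
      by (rule lc_step[of A xs1 Y xs2]) (use h gen_nt.hyps(1) lc_refl in auto)
    from lc_trans[OF h(3) this] have "lc P (Inl A) (Inr a) (y @ w2)" by simp
    then show ?thesis using h w' gen_nt.hyps(3) gen_nil
      by (intro exI[of _ "[]"] exI[of _ "Inl A"] exI[of _ xs] exI[of _ "y @ w2"] exI[of _ v]) simp
  qed
qed

lemma gen_lc: "gen P [Z] (a # w) \<Longrightarrow> lc P Z (Inr a) w"
proof -
  assume "gen P [Z] (a # w)"
  from gen_first[OF this refl] obtain xs1 Y xs2 y w2 where
    h: "[Z] = xs1 @ Y # xs2" "gen P xs1 []" "lc P Y (Inr a) y" "gen P xs2 w2" "w = y @ w2"
    by blast
  then have "xs1 = []" "Y = Z" "xs2 = []" by (cases xs1; auto)+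
  then have "w2 = []" using h(4) gen_nil_D by blast
  then show ?thesis using h \<open>Y = Z\<close> by simp
qed

definition SymR :: "'a cfg_prods \<Rightarrow> (nat + 'a) set" where
  "SymR P = (\<Union>(A, \<alpha>)\<in>P. set \<alpha>)"

definition SufU :: "'a cfg_prods \<Rightarrow> (nat + 'a) list set" where
  "SufU P = insert [] (\<Union>(A, \<alpha>)\<in>P. (\<lambda>k. drop k \<alpha>) ` {..length \<alpha>})"

lemma finite_SymR: "finite P \<Longrightarrow> finite (SymR P)"
  unfolding SymR_def by auto

lemma finite_SufU: "finite P \<Longrightarrow> finite (SufU P)"
  unfolding SufU_def by auto

lemma SufU_drop: "(A, \<alpha>) \<in> P \<Longrightarrow> drop k \<alpha> \<in> SufU P"
  unfolding SufU_def by (cases "k \<le> length \<alpha>") auto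

lemma SufU_drop2: "\<gamma> \<in> SufU P \<Longrightarrow> drop j \<gamma> \<in> SufU P"
proof -
  assume "\<gamma> \<in> SufU P"
  then consider "\<gamma> = []" | A \<alpha> k where "(A, \<alpha>) \<in> P" "\<gamma> = drop k \<alpha>"
    unfolding SufU_def by auto
  then show ?thesis
  proof cases
    case 1 then show ?thesis by (simp add: SufU_def)
  next
    case 2 then show ?thesis using SufU_drop[of A \<alpha> P "j + k"] by simp
  qed
qed

lemma SufU_set: "\<gamma> \<in> SufU P \<Longrightarrow> set \<gamma> \<subseteq> SymR P"
proof -
  assume "\<gamma> \<in> SufU P"
  then consider "\<gamma> = []" | A \<alpha> k where "(A, \<alpha>) \<in> P" "\<gamma> = drop k \<alpha>"
    unfolding SufU_def by auto
  then show ?thesis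
  proof cases
    case 1 then show ?thesis by simp
  next
    case 2 then show ?thesis unfolding SymR_def using set_drop_subset by fastforce
  qed
qed

lemma SufU_split: "\<gamma> \<in> SufU P \<Longrightarrow> \<gamma> = xs1 @ Y # xs2 \<Longrightarrow> xs2 \<in> SufU P \<and> Y \<in> SymR P"
proof -
  assume a: "\<gamma> \<in> SufU P" "\<gamma> = xs1 @ Y # xs2"
  have "xs2 = drop (Suc (length xs1)) \<gamma>" using a(2) by simp
  then have "xs2 \<in> SufU P" using SufU_drop2[OF a(1)] by simp
  moreover have "Y \<in> set \<gamma>" using a(2) by simp
  ultimately show ?thesis using SufU_set[OF a(1)] by blast
qed

type_synonym 'a item = "(nat + 'a) \<times> (nat + 'a) \<times> (nat + 'a) list"

definition M :: "'a cfg_prods \<Rightarrow> 'a item \<Rightarrow> 'a list \<Rightarrow> bool" where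
  "M P Ob w \<longleftrightarrow> (\<exists>u v. w = u @ v \<and> gen P (snd (snd Ob)) u \<and> lc P (fst Ob) (fst (snd Ob)) v)"

definition nxt :: "'a cfg_prods \<Rightarrow> (nat + 'a) \<Rightarrow> (nat + 'a) list \<Rightarrow> (nat + 'a) \<Rightarrow> (nat + 'a) \<Rightarrow> (nat + 'a) list \<Rightarrow> bool" where
  "nxt P E \<beta> Y F \<gamma> \<longleftrightarrow> (\<forall>Z y x2 x3. gen P [Y] y \<longrightarrow> gen P \<gamma> x2 \<longrightarrow> lc P Z F x3 \<longrightarrow> M P (Z, E, \<beta>) (y @ x2 @ x3))"

lemma lc_next: "lc P Z E v \<Longrightarrow> v = a # x \<Longrightarrow>
  \<exists>Y F \<gamma> x1 x2 x3. x = x1 @ x2 @ x3 \<and> lc P Y (Inr a) x1 \<and> gen P \<gamma> x2 \<and> lc P Z F x3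
    \<and> (\<forall>Z' y x2' x3'. gen P [Y] y \<longrightarrow> gen P \<gamma> x2' \<longrightarrow> lc P Z' F x3' \<longrightarrow> lc P Z' E (y @ x2' @ x3'))
    \<and> Y \<in> SymR P \<and> F \<in> Inl ` Domain P \<and> \<gamma> \<in> SufU P"
proof (induction arbitrary: x rule: lc.induct)
  case (lc_refl Z)
  then show ?case by simp
next
  case (lc_step D \<alpha> X \<beta> u Z v)
  show ?case
  proof (cases u)
    case Nil
    then have "v = a # x" using lc_step.prems by simp
    from lc_step.IH[OF this] obtain Y F \<gamma> x1 x2 x3 where
      h: "x = x1 @ x2 @ x3" "lc P Y (Inr a) x1" "gen P \<gamma> x2" "lc P Z F x3"
      "\<forall>Z' y x2' x3'. gen P [Y] y \<longrightarrow> gen P \<gamma> x2' \<longrightarrow> lc P Z' F x3' \<longrightarrow> lc P Z' (Inl D) (y @ x2' @ x3')"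
      "Y \<in> SymR P" "F \<in> Inl ` Domain P" "\<gamma> \<in> SufU P"
      by blast
    have "\<forall>Z' y x2' x3'. gen P [Y] y \<longrightarrow> gen P \<gamma> x2' \<longrightarrow> lc P Z' F x3' \<longrightarrow> lc P Z' X (y @ x2' @ x3')"
    proof (intro allI impI)
      fix Z' y x2' x3'
      assume "gen P [Y] y" "gen P \<gamma> x2'" "lc P Z' F x3'"
      with h(5) have "lc P Z' (Inl D) (y @ x2' @ x3')" by blast
      from lc.lc_step[OF lc_step.hyps(1,2) _ this, of "[]"] lc_step.hyps(3) Nil
      show "lc P Z' X (y @ x2' @ x3')" by simp
    qed
    then show ?thesis using h by blast
  next
    case (Cons b u')
    then have "b = a" and x: "x = u' @ v" using lc_step.prems by auto
    with Cons have "u = a # u'" by simp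
    from gen_first[OF lc_step.hyps(3) this] obtain xs1 Y xs2 y w2 where
      h: "\<beta> = xs1 @ Y # xs2" "gen P xs1 []" "lc P Y (Inr a) y" "gen P xs2 w2" "u' = y @ w2"
      by blast
    have "\<beta> \<in> SufU P" using SufU_drop[OF lc_step.hyps(1), of "Suc (length \<alpha>)"] by simp
    from SufU_split[OF this h(1)] have U: "xs2 \<in> SufU P" "Y \<in> SymR P" by auto
    have D: "Inl D \<in> Inl ` Domain P" using lc_step.hyps(1) by auto
    have "\<forall>Z' y x2' x3'. gen P [Y] y \<longrightarrow> gen P xs2 x2' \<longrightarrow> lc P Z' (Inl D) x3' \<longrightarrow> lc P Z' X (y @ x2' @ x3')"
    proof (intro allI impI)
      fix Z' y' x2' x3'
      assume a: "gen P [Y] y'" "gen P xs2 x2'" "lc P Z' (Inl D) x3'"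
      have "gen P \<beta> (y' @ x2')" unfolding h(1) by (rule gen_split_I[OF h(2) a(1,2)])
      from lc.lc_step[OF lc_step.hyps(1,2) this a(3)] show "lc P Z' X (y' @ x2' @ x3')" by simp
    qed
    then show ?thesis using h x U D lc_step.hyps(4)
      by (intro exI[of _ Y] exI[of _ "Inl D"] exI[of _ xs2] exI[of _ y] exI[of _ w2] exI[of _ v]) simp
  qed
qed

lemma M_next: "M P (Z, E, \<beta>) (a # x) \<Longrightarrow> \<beta> \<in> SufU P \<Longrightarrow>
  \<exists>Y F \<gamma> x1 x2 x3. x = x1 @ x2 @ x3 \<and> lc P Y (Inr a) x1 \<and> gen P \<gamma> x2 \<and> lc P Z F x3
    \<and> nxt P E \<beta> Y F \<gamma> \<and> Y \<in> SymR P \<and> (F = E \<or> F \<in> Inl ` Domain P) \<and> \<gamma> \<in> SufU P"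
proof -
  assume a: "M P (Z, E, \<beta>) (a # x)" "\<beta> \<in> SufU P"
  then obtain u v where uv: "a # x = u @ v" "gen P \<beta> u" "lc P Z E v" unfolding M_def by auto
  show ?thesis
  proof (cases u)
    case Nil
    then have "v = a # x" using uv by simp
    from lc_next[OF uv(3) this] obtain Y F \<gamma> x1 x2 x3 where
      h: "x = x1 @ x2 @ x3" "lc P Y (Inr a) x1" "gen P \<gamma> x2" "lc P Z F x3"
      "\<forall>Z' y x2' x3'. gen P [Y] y \<longrightarrow> gen P \<gamma> x2' \<longrightarrow> lc P Z' F x3' \<longrightarrow> lc P Z' E (y @ x2' @ x3')"
      "Y \<in> SymR P" "F \<in> Inl ` Domain P" "\<gamma> \<in> SufU P"
      by blast
    have "nxt P E \<beta> Y F \<gamma>" unfolding nxt_def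
    proof (intro allI impI)
      fix Z' y x2' x3'
      assume "gen P [Y] y" "gen P \<gamma> x2'" "lc P Z' F x3'"
      with h(5) have "lc P Z' E (y @ x2' @ x3')" by blast
      then show "M P (Z', E, \<beta>) (y @ x2' @ x3')" unfolding M_def
        using uv(2) Nil by (intro exI[of _ "[]"] exI[of _ "y @ x2' @ x3'"]) simp
    qed
    then show ?thesis using h by blast
  next
    case (Cons b u')
    then have "b = a" and x: "x = u' @ v" using uv by auto
    with Cons have "u = a # u'" by simp
    from gen_first[OF uv(2) this] obtain xs1 Y xs2 y w2 where
      h: "\<beta> = xs1 @ Y # xs2" "gen P xs1 []" "lc P Y (Inr a) y" "gen P xs2 w2" "u' = y @ w2"
      by blast
    from SufU_split[OF a(2) h(1)] have U: "xs2 \<in> SufU P" "Y \<in> SymR P" by auto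
    have "nxt P E \<beta> Y E xs2" unfolding nxt_def
    proof (intro allI impI)
      fix Z' y' x2' x3'
      assume b: "gen P [Y] y'" "gen P xs2 x2'" "lc P Z' E x3'"
      have "gen P \<beta> (y' @ x2')" unfolding h(1) by (rule gen_split_I[OF h(2) b(1,2)])
      then show "M P (Z', E, \<beta>) (y' @ x2' @ x3')" unfolding M_def
        using b(3) by (intro exI[of _ "y' @ x2'"] exI[of _ x3']) simp
    qed
    then show ?thesis using h x U uv(3)
      by (intro exI[of _ Y] exI[of _ E] exI[of _ xs2] exI[of _ y] exI[of _ w2] exI[of _ v]) simp
  qed
qed



fun Mlist :: "'a cfg_prods \<Rightarrow> 'a item list \<Rightarrow> 'a list \<Rightarrow> bool" where
  "Mlist P [] w = (w = [])"
| "Mlist P (Ob # Os) w = (\<exists>u v. w = u @ v \<and> M P Ob u \<and> Mlist P Os v)"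

lemma Mlist_kept: "Mlist P ((if k then [Ob] else []) @ R) y \<Longrightarrow> (\<not> k \<longrightarrow> M P Ob []) \<Longrightarrow>
  \<exists>u r. y = u @ r \<and> M P Ob u \<and> Mlist P R r"
  by (cases k) auto

fun chain :: "('q, 'g, 'd) mpda \<Rightarrow> ('q \<times> 'g list) list \<Rightarrow> bool" where
  "chain A (x # y # r) = (mpda_move A x y \<and> chain A (y # r))"
| "chain A _ = True"

lemma chain_iff: "chain A cs \<longleftrightarrow> (\<forall>i. Suc i < length cs \<longrightarrow> mpda_move A (cs ! i) (cs ! Suc i))"
proof (induction A cs rule: chain.induct)
  case (1 A x y r)
  show ?case
  proof
    assume "chain A (x # y # r)"
    then show "\<forall>i. Suc i < length (x # y # r) \<longrightarrow> mpda_move A ((x # y # r) ! i) ((x # y # r) ! Suc i)"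
      using 1 by (auto simp: less_Suc_eq_0_disj)
  next
    assume h: "\<forall>i. Suc i < length (x # y # r) \<longrightarrow> mpda_move A ((x # y # r) ! i) ((x # y # r) ! Suc i)"
    have "mpda_move A x y" using h[rule_format, of 0] by simp
    moreover have "chain A (y # r)" using 1 h by (metis Suc_less_eq length_Cons nth_Cons_Suc)
    ultimately show "chain A (x # y # r)" by simp
  qed
qed auto

lemma next_word_single: "next_word tri [a] = [(tri, a)]"
  by (simp add: next_word_def)

lemma next_word_cons2: "next_word tri (a # b # r) = (b, a) # next_word tri (b # r)"
  by (simp add: next_word_def)

type_synonym 'a st = "'a \<times> 'a \<times> 'a item option"

definition obl :: "'a st \<Rightarrow> 'a item list" where
  "obl q = (case snd (snd q) of None \<Rightarrow> [] | Some Ob \<Rightarrow> [Ob])"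

definition obs :: "'a st list \<Rightarrow> 'a item list" where
  "obs \<sigma> = concat (map obl \<sigma>)"

definition cur :: "'a st \<Rightarrow> 'a" where "cur q = fst (snd q)"

definition outp :: "'a st \<Rightarrow> 'a \<times> 'a" where "outp q = (fst q, fst (snd q))"

locale ctx =
  fixes P :: "'a cfg_prods" and S :: nat and \<Sigma> :: "'a set" and tri :: 'a
  assumes finP: "finite P" and fin\<Sigma>: "finite \<Sigma>" and tri: "tri \<notin> \<Sigma>"
begin

definition SymU :: "(nat + 'a) set" where
  "SymU = insert (Inl S) (Inr ` \<Sigma> \<union> SymR P \<union> Inl ` Domain P)"

definition ItemsU :: "'a item set" where
  "ItemsU = SymU \<times> SymU \<times> SufU P"

definition Qset :: "'a st set" where
  "Qset = {(d, c, ob). c \<in> \<Sigma> \<and> ((ob = None \<and> d = tri) \<or> (d \<in> \<Sigma> \<and> (\<exists>Ob \<in> ItemsU. ob = Some Ob)))}"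

definition rd :: "'a item \<Rightarrow> 'a \<Rightarrow> 'a item list \<Rightarrow> bool" where
  "rd Ob a N \<longleftrightarrow> (\<exists>Y F \<gamma> k1 k2. nxt P (fst (snd Ob)) (snd (snd Ob)) Y F \<gamma>
     \<and> (\<not> k1 \<longrightarrow> lc P Y (Inr a) []) \<and> (\<not> k2 \<longrightarrow> gen P \<gamma> [] \<and> lc P (fst Ob) F [])
     \<and> N = (if k1 then [(Y, Inr a, [])] else []) @ (if k2 then [(fst Ob, F, \<gamma>)] else []))"

definition Tr :: "('a st \<times> 'a st option \<times> 'a st option \<times> 'a st) set" where
  "Tr = {(p, None, None, q) | p q. p \<in> Qset \<and> q \<in> Qset \<and>
          (\<exists>d c Ob d' Ob'. p = (d, c, Some Ob) \<and> q = (d', d, Some Ob') \<and> rd Ob d [Ob'])}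
      \<union> {(p, None, Some s, q) | p q s. p \<in> Qset \<and> q \<in> Qset \<and> s \<in> Qset \<and>
          (\<exists>d c Ob d' O1 d2 c2 O2. p = (d, c, Some Ob) \<and> q = (d', d, Some O1) \<and> s = (d2, c2, Some O2)
              \<and> rd Ob d [O1, O2])}
      \<union> {(p, Some s, None, s) | p s. p \<in> Qset \<and> s \<in> Qset \<and>
          (\<exists>d c Ob. p = (d, c, Some Ob) \<and> fst (snd s) = d \<and> rd Ob d [])}"

definition Aut :: "('a st, 'a st, 'a \<times> 'a) mpda" where
  "Aut = \<lparr> states = Qset, outputs = outp ` Qset, stack = Qset, trans = Tr, out = outp,
          initial = {(d, c, Some (Inl S, Inr c, [])) | d c. d \<in> \<Sigma> \<and> c \<in> \<Sigma>},
          final = {q \<in> Qset. snd (snd q) = None} \<rparr>"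

lemma finite_ItemsU: "finite ItemsU"
proof -
  have "finite SymU" unfolding SymU_def using finP fin\<Sigma> finite_SymR[OF finP] finite_Domain[OF finP] by simp
  then show ?thesis unfolding ItemsU_def using finite_SufU[OF finP] by simp
qed

lemma finite_Qset: "finite Qset"
proof -
  have "Qset \<subseteq> insert tri \<Sigma> \<times> \<Sigma> \<times> insert None (Some ` ItemsU)"
    unfolding Qset_def by auto
  moreover have "finite (insert tri \<Sigma> \<times> \<Sigma> \<times> insert None (Some ` ItemsU))"
    using fin\<Sigma> finite_ItemsU by auto
  ultimately show ?thesis by (rule finite_subset)
qed

lemma Aut_wf: "mpda_wf Aut"
  unfolding mpda_wf_def
proof (intro conjI)
  show "finite (states Aut)" "finite (outputs Aut)" "finite (stack Aut)"
    using finite_Qset by (auto simp: Aut_def)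
  show "\<forall>(q, \<gamma>, \<gamma>', q')\<in>trans Aut. q \<in> states Aut \<and> q' \<in> states Aut \<and> set_option \<gamma> \<subseteq> stack Aut
          \<and> set_option \<gamma>' \<subseteq> stack Aut \<and> \<not> (\<gamma> \<noteq> None \<and> \<gamma>' \<noteq> None)"
    unfolding Aut_def Tr_def by auto
  show "\<forall>q\<in>states Aut. out Aut q \<in> outputs Aut" by (simp add: Aut_def)
  show "initial Aut \<subseteq> states Aut"
    unfolding Aut_def Qset_def ItemsU_def SymU_def SufU_def by auto
  show "final Aut \<subseteq> states Aut" unfolding Aut_def by auto
qed

lemma Aut_pop: "pop_normalized Aut"
  unfolding pop_normalized_def
  by (rule exI[of _ id]) (auto simp: Aut_def Tr_def)

lemma move_cases: "mpda_move Aut (p, \<sigma>) (p', \<sigma>') \<Longrightarrow>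
   ((p, None, None, p') \<in> Tr \<and> \<sigma>' = \<sigma> \<and> \<sigma> \<noteq> [])
 \<or> (\<exists>s. (p, None, Some s, p') \<in> Tr \<and> \<sigma>' = s # \<sigma> \<and> \<sigma> \<noteq> [])
 \<or> (\<exists>s. (p, Some s, None, p') \<in> Tr \<and> \<sigma> = s # \<sigma>')"
proof -
  assume "mpda_move Aut (p, \<sigma>) (p', \<sigma>')"
  then obtain \<gamma> \<gamma>' \<alpha> where h: "(p, \<gamma>, \<gamma>', p') \<in> Tr" "\<sigma> = opt_list \<gamma> @ \<alpha>" "\<sigma>' = opt_list \<gamma>' @ \<alpha>" "\<sigma> \<noteq> []"
    unfolding mpda_move_def Aut_def by auto
  show ?thesis
  proof (cases \<gamma>)
    case None
    then show ?thesis
    proof (cases \<gamma>')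
      case None
      then show ?thesis using h \<open>\<gamma> = None\<close> by (simp add: opt_list_def)
    next
      case (Some s)
      then show ?thesis using h \<open>\<gamma> = None\<close>
        by (intro disjI2 disjI1 exI[of _ s]) (simp add: opt_list_def)
    qed
  next
    case (Some s)
    then have "\<gamma>' = None" using h(1) unfolding Tr_def by auto
    then show ?thesis using h Some
      by (intro disjI2 exI[of _ s]) (simp add: opt_list_def)
  qed
qed

lemma move_int: "(p, None, None, p') \<in> Tr \<Longrightarrow> \<sigma> \<noteq> [] \<Longrightarrow> mpda_move Aut (p, \<sigma>) (p', \<sigma>)"
  unfolding mpda_move_def Aut_def
  by (intro exI[of _ None] exI[of _ \<sigma>]) (simp add: opt_list_def)

lemma move_push: "(p, None, Some s, p') \<in> Tr \<Longrightarrow> \<sigma> \<noteq> [] \<Longrightarrow> mpda_move Aut (p, \<sigma>) (p', s # \<sigma>)"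
  unfolding mpda_move_def Aut_def by (fastforce simp: opt_list_def)

lemma move_pop: "(p, Some s, None, p') \<in> Tr \<Longrightarrow> mpda_move Aut (p, s # \<sigma>) (p', \<sigma>)"
  unfolding mpda_move_def Aut_def by (fastforce simp: opt_list_def)

lemma rd_sound: "rd Ob a N \<Longrightarrow> Mlist P (N @ R) y \<Longrightarrow> Mlist P (Ob # R) (a # y)"
proof -
  assume r: "rd Ob a N" and m: "Mlist P (N @ R) y"
  obtain Z E \<beta> where Ob: "Ob = (Z, E, \<beta>)" by (cases Ob) auto
  from r obtain Y F \<gamma> k1 k2 where h: "nxt P E \<beta> Y F \<gamma>" "\<not> k1 \<longrightarrow> lc P Y (Inr a) []"
    "\<not> k2 \<longrightarrow> gen P \<gamma> [] \<and> lc P Z F []"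
    "N = (if k1 then [(Y, Inr a, [])] else []) @ (if k2 then [(Z, F, \<gamma>)] else [])"
    using r unfolding rd_def Ob fst_conv snd_conv by blast
  have m': "Mlist P ((if k1 then [(Y, Inr a, [])] else []) @ (if k2 then [(Z, F, \<gamma>)] else []) @ R) y"
    using m h(4) by simp
  have n1: "\<not> k1 \<longrightarrow> M P (Y, Inr a, []) []" using h(2) gen_nil unfolding M_def by auto
  from Mlist_kept[OF m' n1] obtain x1 r1 where
    a1: "y = x1 @ r1" "M P (Y, Inr a, []) x1" "Mlist P ((if k2 then [(Z, F, \<gamma>)] else []) @ R) r1" by blast
  have n2: "\<not> k2 \<longrightarrow> M P (Z, F, \<gamma>) []" using h(3) unfolding M_def by auto
  from Mlist_kept[OF a1(3) n2] obtain x23 r2 where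
    a2: "r1 = x23 @ r2" "M P (Z, F, \<gamma>) x23" "Mlist P R r2" by blast
  from a1(2) obtain u v where "x1 = u @ v" "gen P [] u" "lc P Y (Inr a) v" unfolding M_def by auto
  then have "lc P Y (Inr a) x1" using gen_nil_D by fastforce
  from lc_gen[OF this, of "[a]"] have g1: "gen P [Y] (a # x1)" using gen_tm_iff by fastforce
  from a2(2) obtain x2 x3 where "x23 = x2 @ x3" "gen P \<gamma> x2" "lc P Z F x3" unfolding M_def by auto
  with h(1) g1 have "M P (Z, E, \<beta>) ((a # x1) @ x2 @ x3)" unfolding nxt_def by blast
  then show ?thesis using a1(1) a2(1) a2(3) \<open>x23 = x2 @ x3\<close> Ob
    by (simp, intro exI[of _ "a # x1 @ x2 @ x3"] exI[of _ r2]) simp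
qed

end


context ctx begin

lemma move_facts: "mpda_move Aut (p, \<sigma>) (p', \<sigma>') \<Longrightarrow> set \<sigma> \<subseteq> Qset \<Longrightarrow>
  \<exists>d c Ob. p = (d, c, Some Ob) \<and> p \<in> Qset \<and> p' \<in> Qset \<and> set \<sigma>' \<subseteq> Qset \<and> cur p' = d
   \<and> (\<forall>ys. Mlist P (obl p' @ obs \<sigma>') ys \<longrightarrow> Mlist P (obl p @ obs \<sigma>) (d # ys))
   \<and> \<sigma> \<noteq> [] \<and> ((\<sigma>' \<noteq> [] \<and> last \<sigma> = last \<sigma>') \<or> (\<sigma>' = [] \<and> last \<sigma> = p'))"
proof -
  assume mv: "mpda_move Aut (p, \<sigma>) (p', \<sigma>')" and sQ: "set \<sigma> \<subseteq> Qset"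
  from move_cases[OF mv] consider
      (int) "(p, None, None, p') \<in> Tr" "\<sigma>' = \<sigma>" "\<sigma> \<noteq> []"
    | (push) s where "(p, None, Some s, p') \<in> Tr" "\<sigma>' = s # \<sigma>" "\<sigma> \<noteq> []"
    | (pop) s where "(p, Some s, None, p') \<in> Tr" "\<sigma> = s # \<sigma>'"
    by blast
  then show ?thesis
  proof cases
    case int
    then obtain d c Ob d' Ob' where h: "p \<in> Qset" "p' \<in> Qset" "p = (d, c, Some Ob)" "p' = (d', d, Some Ob')"
      "rd Ob d [Ob']"
      unfolding Tr_def by blast
    have "\<forall>ys. Mlist P (obl p' @ obs \<sigma>') ys \<longrightarrow> Mlist P (obl p @ obs \<sigma>) (d # ys)"
      using rd_sound[OF h(5), of "obs \<sigma>"] h int by (simp add: obl_def)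
    then show ?thesis using h int sQ
      by (intro exI[of _ d] exI[of _ c] exI[of _ Ob]) (simp add: cur_def)
  next
    case push
    then obtain d c Ob d' O1 d2 c2 O2 where h: "p \<in> Qset" "p' \<in> Qset" "s \<in> Qset" "p = (d, c, Some Ob)"
      "p' = (d', d, Some O1)" "s = (d2, c2, Some O2)" "rd Ob d [O1, O2]"
      unfolding Tr_def by blast
    have "\<forall>ys. Mlist P (obl p' @ obs \<sigma>') ys \<longrightarrow> Mlist P (obl p @ obs \<sigma>) (d # ys)"
      using rd_sound[OF h(7), of "obs \<sigma>"] h push by (simp add: obl_def obs_def)
    then show ?thesis using h push sQ
      by (intro exI[of _ d] exI[of _ c] exI[of _ Ob]) (simp add: cur_def)
  next
    case pop
    then obtain d c Ob where h: "p \<in> Qset" "p' \<in> Qset" "s = p'" "p = (d, c, Some Ob)"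
      "fst (snd p') = d" "rd Ob d []"
      unfolding Tr_def by blast
    have "\<forall>ys. Mlist P (obl p' @ obs \<sigma>') ys \<longrightarrow> Mlist P (obl p @ obs \<sigma>) (d # ys)"
      using rd_sound[OF h(6), of "obl p' @ obs \<sigma>'"] h pop by (simp add: obl_def obs_def)
    then show ?thesis using h pop sQ
      by (intro exI[of _ d] exI[of _ c] exI[of _ Ob]) (auto simp: cur_def)
  qed
qed

lemma no_move_empty: "\<not> mpda_move Aut (p, []) c'"
  unfolding mpda_move_def by simp

lemma sound: "chain Aut cs \<Longrightarrow> cs \<noteq> [] \<Longrightarrow> fst (hd cs) \<in> Qset \<Longrightarrow> set (snd (hd cs)) \<subseteq> Qset
  \<Longrightarrow> fst (last cs) \<in> final Aut \<Longrightarrow> snd (last cs) = [] \<Longrightarrow>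
  Mlist P (obl (fst (hd cs)) @ obs (snd (hd cs))) (map (cur \<circ> fst) (tl cs))
  \<and> (snd (hd cs) \<noteq> [] \<longrightarrow> snd (snd (last (snd (hd cs)))) = None)
  \<and> map (outp \<circ> fst) cs = next_word tri (map (cur \<circ> fst) cs)
  \<and> set (map (cur \<circ> fst) cs) \<subseteq> \<Sigma>"
proof (induction cs)
  case Nil
  then show ?case by simp
next
  case (Cons x r)
  obtain p \<sigma> where x: "x = (p, \<sigma>)" by (cases x)
  show ?case
  proof (cases r)
    case Nil
    then have fin: "p \<in> Qset" "snd (snd p) = None" "\<sigma> = []" using Cons.prems x by (auto simp: Aut_def)
    then obtain c where p: "p = (tri, c, None)" "c \<in> \<Sigma>" unfolding Qset_def by auto
    show ?thesis using Nil x p fin by (simp add: obl_def obs_def cur_def outp_def next_word_single)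
  next
    case (Cons y r')
    note r_eq = this
    obtain p' \<sigma>' where y: "y = (p', \<sigma>')" by (cases y)
    have mv: "mpda_move Aut (p, \<sigma>) (p', \<sigma>')" and ch: "chain Aut (y # r')"
      using Cons.prems(1) x y r_eq by auto
    have sQ: "set \<sigma> \<subseteq> Qset" using Cons.prems x by simp
    from move_facts[OF mv sQ] obtain d c Ob where h: "p = (d, c, Some Ob)" "p \<in> Qset" "p' \<in> Qset"
      "set \<sigma>' \<subseteq> Qset" "cur p' = d"
      "\<forall>ys. Mlist P (obl p' @ obs \<sigma>') ys \<longrightarrow> Mlist P (obl p @ obs \<sigma>) (d # ys)"
      "\<sigma> \<noteq> []" "(\<sigma>' \<noteq> [] \<and> last \<sigma> = last \<sigma>') \<or> (\<sigma>' = [] \<and> last \<sigma> = p')"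
      by blast
    have IH: "Mlist P (obl p' @ obs \<sigma>') (map (cur \<circ> fst) r')
      \<and> (\<sigma>' \<noteq> [] \<longrightarrow> snd (snd (last \<sigma>')) = None)
      \<and> map (outp \<circ> fst) (y # r') = next_word tri (map (cur \<circ> fst) (y # r'))
      \<and> set (map (cur \<circ> fst) (y # r')) \<subseteq> \<Sigma>"
    proof -
      have ch': "chain Aut r" using ch r_eq by simp
      have "r \<noteq> []" "fst (hd r) \<in> Qset" "set (snd (hd r)) \<subseteq> Qset"
        using r_eq h(3,4) y by auto
      moreover have "fst (last r) \<in> final Aut" "snd (last r) = []"
        using Cons.prems(5,6) r_eq by auto
      ultimately show ?thesis using Cons.IH[OF ch'] r_eq y by (simp add: comp_def)
    qed
    have last: "snd (snd (last \<sigma>)) = None"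
    proof (cases "\<sigma>' = []")
      case True
      have "r' = []"
      proof (rule ccontr)
        assume "r' \<noteq> []"
        then obtain z r'' where "r' = z # r''" by (cases r') auto
        then have "mpda_move Aut (p', []) z" using ch y True by simp
        then show False using no_move_empty by blast
      qed
      then have "p' \<in> final Aut" using Cons.prems(5) r_eq x y by simp
      then show ?thesis using h(8) True by (simp add: Aut_def)
    next
      case False
      then show ?thesis using h(8) IH by simp
    qed
    have "d \<in> \<Sigma>" "c \<in> \<Sigma>" using h(1,2) unfolding Qset_def by auto
    have cs: "map (cur \<circ> fst) (x # r) = c # d # map (cur \<circ> fst) r'"
      using x y r_eq h(1,5) by (simp add: cur_def)
    have M1: "Mlist P (obl (fst (hd (x # r))) @ obs (snd (hd (x # r)))) (map (cur \<circ> fst) (tl (x # r)))"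
      using h(6) IH h(5) x y r_eq by (simp add: cur_def)
    have "map (outp \<circ> fst) (x # r) = (d, c) # map (outp \<circ> fst) (y # r')"
      using x h(1) r_eq by (simp add: outp_def)
    also have "\<dots> = (d, c) # next_word tri (d # map (cur \<circ> fst) r')"
      using IH h(5) y by simp
    also have "\<dots> = next_word tri (map (cur \<circ> fst) (x # r))"
      unfolding cs next_word_cons2 ..
    finally have N1: "map (outp \<circ> fst) (x # r) = next_word tri (map (cur \<circ> fst) (x # r))" .
    have L1: "set (map (cur \<circ> fst) (x # r)) \<subseteq> \<Sigma>"
      using IH cs \<open>c \<in> \<Sigma>\<close> h(5) y by simp
    show ?thesis using M1 N1 L1 last x by (simp add: o_def)
  qed
qed

end


fun stkof :: "'a \<Rightarrow> 'a \<Rightarrow> ('a item \<times> 'a list) list \<Rightarrow> 'a st list" where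
  "stkof tri c [] = [(tri, c, None)]"
| "stkof tri c ((Ob, v) # rest) = (hd v, c, Some Ob) # stkof tri (last v) rest"

lemma stkof_ne: "stkof tri c ps \<noteq> []"
  by (cases ps) auto

lemma chain_Cons: "cs \<noteq> [] \<Longrightarrow> mpda_move A x (hd cs) \<Longrightarrow> chain A cs \<Longrightarrow> chain A (x # cs)"
  by (cases cs) auto

context ctx begin

lemma Tr_pop_I: "p \<in> Qset \<Longrightarrow> s \<in> Qset \<Longrightarrow> p = (d, c, Some Ob) \<Longrightarrow> fst (snd s) = d
  \<Longrightarrow> rd Ob d [] \<Longrightarrow> (p, Some s, None, s) \<in> Tr"
  unfolding Tr_def
  apply (rule UnI2)
  apply (rule CollectI)
  apply (rule exI[of _ p], rule exI[of _ s])
  apply (intro conjI refl, assumption, assumption)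
  apply (rule exI[of _ d], rule exI[of _ c], rule exI[of _ Ob])
  apply (intro conjI; assumption)
  done

lemma Tr_int_I: "p \<in> Qset \<Longrightarrow> q \<in> Qset \<Longrightarrow> p = (d, c, Some Ob) \<Longrightarrow> q = (d', d, Some Ob')
  \<Longrightarrow> rd Ob d [Ob'] \<Longrightarrow> (p, None, None, q) \<in> Tr"
  unfolding Tr_def
  apply (rule UnI1, rule UnI1)
  apply (rule CollectI)
  apply (rule exI[of _ p], rule exI[of _ q])
  apply (intro conjI refl, assumption, assumption)
  apply (rule exI[of _ d], rule exI[of _ c], rule exI[of _ Ob], rule exI[of _ d'], rule exI[of _ Ob'])
  apply (intro conjI; assumption)
  done

lemma Tr_push_I: "p \<in> Qset \<Longrightarrow> q \<in> Qset \<Longrightarrow> s \<in> Qset \<Longrightarrow> p = (d, c, Some Ob)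
  \<Longrightarrow> q = (d', d, Some O1) \<Longrightarrow> s = (d2, c2, Some O2)
  \<Longrightarrow> rd Ob d [O1, O2] \<Longrightarrow> (p, None, Some s, q) \<in> Tr"
  unfolding Tr_def
  apply (rule UnI1, rule UnI2)
  apply (rule CollectI)
  apply (rule exI[of _ p], rule exI[of _ q], rule exI[of _ s])
  apply (intro conjI refl, assumption, assumption, assumption)
  apply (rule exI[of _ d], rule exI[of _ c], rule exI[of _ Ob], rule exI[of _ d'], rule exI[of _ O1])
  apply (rule exI[of _ d2], rule exI[of _ c2], rule exI[of _ O2])
  apply (intro conjI; assumption)
  done

lemma rd_choice:
  assumes "nxt P E \<beta> Y F \<gamma>" "x1 = [] \<longrightarrow> lc P Y (Inr a) []" "x23 = [] \<longrightarrow> gen P \<gamma> [] \<and> lc P Z F []"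
  shows "rd (Z, E, \<beta>) a ((if x1 \<noteq> [] then [(Y, Inr a, [])] else []) @ (if x23 \<noteq> [] then [(Z, F, \<gamma>)] else []))"
  unfolding rd_def using assms
  by (intro exI[of _ Y] exI[of _ F] exI[of _ \<gamma>] exI[of _ "x1 \<noteq> []"] exI[of _ "x23 \<noteq> []"]) simp

lemma comp: "length (concat (map snd ((Ob, v) # ps))) = n \<Longrightarrow> c \<in> \<Sigma> \<Longrightarrow>
  (\<forall>(O', v') \<in> set ((Ob, v) # ps). v' \<noteq> [] \<and> set v' \<subseteq> \<Sigma> \<and> M P O' v' \<and> O' \<in> ItemsU) \<Longrightarrow>
  \<exists>cs. chain Aut cs \<and> cs \<noteq> [] \<and> hd cs = ((hd v, c, Some Ob), stkof tri (last v) ps)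
     \<and> fst (last cs) \<in> final Aut \<and> snd (last cs) = []
     \<and> map (cur \<circ> fst) cs = c # concat (map snd ((Ob, v) # ps))"
proof (induction n arbitrary: c Ob v ps rule: less_induct)
  case (less n c Ob v ps)
  have vne: "v \<noteq> []" and vS: "set v \<subseteq> \<Sigma>" and Mv: "M P Ob v" and ObU: "Ob \<in> ItemsU"
    using less.prems(3) by auto
  have psok: "\<forall>(O', v') \<in> set ps. v' \<noteq> [] \<and> set v' \<subseteq> \<Sigma> \<and> M P O' v' \<and> O' \<in> ItemsU"
    using less.prems(3) by auto
  obtain a x where v: "v = a # x" using vne by (cases v) auto
  obtain Z E \<beta> where Ob: "Ob = (Z, E, \<beta>)" by (cases Ob) auto
  have ZU: "Z \<in> SymU" and EU: "E \<in> SymU" and \<beta>U: "\<beta> \<in> SufU P" using ObU Ob unfolding ItemsU_def by auto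
  have aS: "a \<in> \<Sigma>" and xS: "set x \<subseteq> \<Sigma>" using vS v by auto
  from M_next[OF Mv[unfolded Ob v] \<beta>U] obtain Y F \<gamma> x1 x2 x3 where
    h: "x = x1 @ x2 @ x3" "lc P Y (Inr a) x1" "gen P \<gamma> x2" "lc P Z F x3"
    "nxt P E \<beta> Y F \<gamma>" "Y \<in> SymR P" "F = E \<or> F \<in> Inl ` Domain P" "\<gamma> \<in> SufU P"
    by blast
  define O1 where "O1 = (Y, (Inr a :: nat + 'a), ([] :: (nat + 'a) list))"
  define O2 where "O2 = (Z, F, \<gamma>)"
  define x23 where "x23 = x2 @ x3"
  have O1U: "O1 \<in> ItemsU" unfolding O1_def ItemsU_def SymU_def SufU_def using h(6) aS by auto
  have O2U: "O2 \<in> ItemsU" unfolding O2_def ItemsU_def using ZU EU h(7,8) by (auto simp: SymU_def)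
  have M1: "M P O1 x1" unfolding O1_def M_def using h(2) gen_nil by fastforce
  have M2: "M P O2 x23" unfolding O2_def M_def x23_def using h(3,4) by auto
  have rdc: "rd Ob a ((if x1 \<noteq> [] then [O1] else []) @ (if x23 \<noteq> [] then [O2] else []))"
    unfolding Ob O1_def O2_def
  proof (rule rd_choice[OF h(5)])
    show "x1 = [] \<longrightarrow> lc P Y (Inr a) []" using h(2) by auto
    show "x23 = [] \<longrightarrow> gen P \<gamma> [] \<and> lc P Z F []" using h(3,4) unfolding x23_def by auto
  qed
  have x: "x = x1 @ x23" using h(1) x23_def by simp
  have x1S: "set x1 \<subseteq> \<Sigma>" and x23S: "set x23 \<subseteq> \<Sigma>" using xS x by auto
  define p where "p = (a, c, Some Ob)"
  have pQ: "p \<in> Qset" unfolding p_def Qset_def using aS less.prems(2) ObU by auto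
  have len: "n = Suc (length x + length (concat (map snd ps)))" using less.prems(1) v by simp
  have hd0: "(hd v, c, Some Ob) = p" using v p_def by simp
  consider (A) "x1 = []" "x23 = []" | (B) "x1 \<noteq> []" "x23 = []" | (C) "x1 = []" "x23 \<noteq> []"
    | (D) "x1 \<noteq> []" "x23 \<noteq> []" by blast
  then show ?case
  proof cases
    case A
    then have rd0: "rd Ob a []" using rdc by simp
    have vx: "v = [a]" using v x A by simp
    show ?thesis
    proof (cases ps)
      case Nil
      define s where "s = (tri, a, (None :: 'a item option))"
      have sQ: "s \<in> Qset" unfolding s_def Qset_def using aS by auto
      have "(p, Some s, None, s) \<in> Tr" by (rule Tr_pop_I[OF pQ sQ p_def _ rd0]) (simp add: s_def)
      then have mv: "mpda_move Aut (p, [s]) (s, [])" by (rule move_pop)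
      have fin: "s \<in> final Aut" using sQ unfolding Aut_def s_def by simp
      show ?thesis
        using mv fin Nil vx hd0 s_def p_def
        by (intro exI[of _ "[(p, [s]), (s, [])]"]) (simp add: cur_def o_def p_def)
    next
      case (Cons q ps')
      obtain Oq v2 where q: "q = (Oq, v2)" by (cases q) auto
      have v2: "v2 \<noteq> []" "set v2 \<subseteq> \<Sigma>" "Oq \<in> ItemsU" using psok Cons q by auto
      define s where "s = (hd v2, a, Some Oq)"
      have sQ: "s \<in> Qset" unfolding s_def Qset_def using aS v2 by auto
      have "(p, Some s, None, s) \<in> Tr" by (rule Tr_pop_I[OF pQ sQ p_def _ rd0]) (simp add: s_def)
      then have mv: "mpda_move Aut (p, s # stkof tri (last v2) ps') (s, stkof tri (last v2) ps')"
        by (rule move_pop)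
      have L: "length (concat (map snd ((Oq, v2) # ps'))) < n" using len Cons q by simp
      have Pm: "\<forall>(O', v') \<in> set ((Oq, v2) # ps'). v' \<noteq> [] \<and> set v' \<subseteq> \<Sigma> \<and> M P O' v' \<and> O' \<in> ItemsU"
        using psok Cons q by simp
      have EX: "\<exists>cs. (chain Aut cs) \<and> (cs \<noteq> []) \<and> (hd cs = ((hd v2, a, Some Oq), stkof tri (last v2) ps')) \<and> (fst (last cs) \<in> final Aut) \<and> (snd (last cs) = []) \<and> (map (cur \<circ> fst) cs = a # concat (map snd ((Oq, v2) # ps')))"
        by (rule less.IH[OF L refl aS Pm])
      then obtain cs where
        cs: "chain Aut cs" "cs \<noteq> []" "hd cs = ((hd v2, a, Some Oq), stkof tri (last v2) ps')"
        "fst (last cs) \<in> final Aut" "snd (last cs) = []"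
        "map (cur \<circ> fst) cs = a # concat (map snd ((Oq, v2) # ps'))"
        by (elim exE conjE) (erule that; assumption)
      have "chain Aut ((p, s # stkof tri (last v2) ps') # cs)"
        by (rule chain_Cons[OF cs(2) _ cs(1)]) (use mv cs(3) s_def in simp)
      then show ?thesis using cs hd0 vx Cons q s_def
        by (intro exI[of _ "(p, s # stkof tri (last v2) ps') # cs"]) (simp add: cur_def o_def p_def)
    qed
  next
    case B
    then have rd1: "rd Ob a [O1]" using rdc by simp
    obtain d' where "d' = hd x1" by simp
    define q where "q = (hd x1, a, Some O1)"
    have qQ: "q \<in> Qset" unfolding q_def Qset_def using aS B x1S O1U by auto
    have "(p, None, None, q) \<in> Tr" by (rule Tr_int_I[OF pQ qQ p_def q_def rd1])
    then have mv: "mpda_move Aut (p, stkof tri (last v) ps) (q, stkof tri (last v) ps)"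
      by (rule move_int[OF _ stkof_ne])
    have lv: "last v = last x1" using v x B by simp
    have L: "length (concat (map snd ((O1, x1) # ps))) < n" using len x B by simp
    have Pm: "\<forall>(O', v') \<in> set ((O1, x1) # ps). v' \<noteq> [] \<and> set v' \<subseteq> \<Sigma> \<and> M P O' v' \<and> O' \<in> ItemsU"
      using psok B x1S M1 O1U by simp
    have EX: "\<exists>cs. (chain Aut cs) \<and> (cs \<noteq> []) \<and> (hd cs = ((hd x1, a, Some O1), stkof tri (last x1) ps)) \<and> (fst (last cs) \<in> final Aut) \<and> (snd (last cs) = []) \<and> (map (cur \<circ> fst) cs = a # concat (map snd ((O1, x1) # ps)))"
      by (rule less.IH[OF L refl aS Pm])
    then obtain cs where
      cs: "chain Aut cs" "cs \<noteq> []" "hd cs = ((hd x1, a, Some O1), stkof tri (last x1) ps)"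
      "fst (last cs) \<in> final Aut" "snd (last cs) = []"
      "map (cur \<circ> fst) cs = a # concat (map snd ((O1, x1) # ps))"
      by (elim exE conjE) (erule that; assumption)
    have "chain Aut ((p, stkof tri (last v) ps) # cs)"
      by (rule chain_Cons[OF cs(2) _ cs(1)]) (use mv cs(3) q_def lv in simp)
    then show ?thesis using cs hd0 v x B
      by (intro exI[of _ "(p, stkof tri (last v) ps) # cs"]) (simp add: cur_def o_def p_def)
  next
    case C
    then have rd1: "rd Ob a [O2]" using rdc by simp
    define q where "q = (hd x23, a, Some O2)"
    have qQ: "q \<in> Qset" unfolding q_def Qset_def using aS C x23S O2U by auto
    have "(p, None, None, q) \<in> Tr" by (rule Tr_int_I[OF pQ qQ p_def q_def rd1])
    then have mv: "mpda_move Aut (p, stkof tri (last v) ps) (q, stkof tri (last v) ps)"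
      by (rule move_int[OF _ stkof_ne])
    have lv: "last v = last x23" using v x C by simp
    have L: "length (concat (map snd ((O2, x23) # ps))) < n" using len x C by simp
    have Pm: "\<forall>(O', v') \<in> set ((O2, x23) # ps). v' \<noteq> [] \<and> set v' \<subseteq> \<Sigma> \<and> M P O' v' \<and> O' \<in> ItemsU"
      using psok C x23S M2 O2U by simp
    have EX: "\<exists>cs. (chain Aut cs) \<and> (cs \<noteq> []) \<and> (hd cs = ((hd x23, a, Some O2), stkof tri (last x23) ps)) \<and> (fst (last cs) \<in> final Aut) \<and> (snd (last cs) = []) \<and> (map (cur \<circ> fst) cs = a # concat (map snd ((O2, x23) # ps)))"
      by (rule less.IH[OF L refl aS Pm])
    then obtain cs where
      cs: "chain Aut cs" "cs \<noteq> []" "hd cs = ((hd x23, a, Some O2), stkof tri (last x23) ps)"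
      "fst (last cs) \<in> final Aut" "snd (last cs) = []"
      "map (cur \<circ> fst) cs = a # concat (map snd ((O2, x23) # ps))"
      by (elim exE conjE) (erule that; assumption)
    have "chain Aut ((p, stkof tri (last v) ps) # cs)"
      by (rule chain_Cons[OF cs(2) _ cs(1)]) (use mv cs(3) q_def lv in simp)
    then show ?thesis using cs hd0 v x C
      by (intro exI[of _ "(p, stkof tri (last v) ps) # cs"]) (simp add: cur_def o_def p_def)
  next
    case D
    then have rd2: "rd Ob a [O1, O2]" using rdc by simp
    define q where "q = (hd x1, a, Some O1)"
    define s where "s = (hd x23, last x1, Some O2)"
    have qQ: "q \<in> Qset" unfolding q_def Qset_def using aS D x1S O1U by auto
    have sQ: "s \<in> Qset" unfolding s_def Qset_def using D x1S x23S O2U by auto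
    have "(p, None, Some s, q) \<in> Tr" by (rule Tr_push_I[OF pQ qQ sQ p_def q_def s_def rd2])
    then have mv: "mpda_move Aut (p, stkof tri (last v) ps) (q, s # stkof tri (last v) ps)"
      by (rule move_push[OF _ stkof_ne])
    have lv: "last v = last x23" using v x D by simp
    have st: "s # stkof tri (last v) ps = stkof tri (last x1) ((O2, x23) # ps)"
      using lv s_def by simp
    have L: "length (concat (map snd ((O1, x1) # (O2, x23) # ps))) < n" using len x D by simp
    have Pm: "\<forall>(O', v') \<in> set ((O1, x1) # (O2, x23) # ps). v' \<noteq> [] \<and> set v' \<subseteq> \<Sigma> \<and> M P O' v' \<and> O' \<in> ItemsU"
      using psok D x1S x23S M1 M2 O1U O2U by simp
    have EX: "\<exists>cs. (chain Aut cs) \<and> (cs \<noteq> []) \<and> (hd cs = ((hd x1, a, Some O1), stkof tri (last x1) ((O2, x23) # ps))) \<and> (fst (last cs) \<in> final Aut) \<and> (snd (last cs) = []) \<and> (map (cur \<circ> fst) cs = a # concat (map snd ((O1, x1) # (O2, x23) # ps)))"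
      by (rule less.IH[OF L refl aS Pm])
    then obtain cs where
      cs: "chain Aut cs" "cs \<noteq> []" "hd cs = ((hd x1, a, Some O1), stkof tri (last x1) ((O2, x23) # ps))"
      "fst (last cs) \<in> final Aut" "snd (last cs) = []"
      "map (cur \<circ> fst) cs = a # concat (map snd ((O1, x1) # (O2, x23) # ps))"
      by (elim exE conjE) (erule that; assumption)
    have "chain Aut ((p, stkof tri (last v) ps) # cs)"
      by (rule chain_Cons[OF cs(2) _ cs(1)]) (use mv cs(3) q_def st in simp)
    then show ?thesis using cs hd0 v x D
      by (intro exI[of _ "(p, stkof tri (last v) ps) # cs"]) (simp add: cur_def o_def p_def)
  qed
qed

end


definition cfgok :: "('q, 'g, 'd) mpda \<Rightarrow> 'q \<times> 'g list \<Rightarrow> bool" where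
  "cfgok A c \<longleftrightarrow> fst c \<in> states A \<and> set (snd c) \<subseteq> stack A"

lemma move_cfgok: "mpda_wf A \<Longrightarrow> mpda_move A c c' \<Longrightarrow> cfgok A c \<Longrightarrow> cfgok A c'"
proof -
  assume wf: "mpda_wf A" and mv: "mpda_move A c c'" and ok: "cfgok A c"
  from mv obtain \<gamma> \<gamma>' \<alpha> where h: "(fst c, \<gamma>, \<gamma>', fst c') \<in> trans A" "snd c = opt_list \<gamma> @ \<alpha>"
    "snd c' = opt_list \<gamma>' @ \<alpha>" unfolding mpda_move_def by blast
  from wf h(1) have "fst c' \<in> states A" "set_option \<gamma>' \<subseteq> stack A"
    unfolding mpda_wf_def by fastforce+
  moreover have "set \<alpha> \<subseteq> stack A" using ok h(2) unfolding cfgok_def by auto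
  ultimately show ?thesis using h(3) unfolding cfgok_def opt_list_def by (auto split: option.splits)
qed

lemma chain_cfgok: "mpda_wf A \<Longrightarrow> chain A cs \<Longrightarrow> cs \<noteq> [] \<Longrightarrow> cfgok A (hd cs) \<Longrightarrow> \<forall>c \<in> set cs. cfgok A c"
proof (induction cs)
  case Nil
  then show ?case by simp
next
  case (Cons x r)
  show ?case
  proof (cases r)
    case Nil
    then show ?thesis using Cons by simp
  next
    case (Cons y r')
    then have "mpda_move A x y" "chain A r" using Cons.prems by auto
    then have "cfgok A y" using move_cfgok Cons.prems by fastforce
    then have "\<forall>c \<in> set r. cfgok A c" using Cons.IH \<open>chain A r\<close> Cons.prems(1) \<open>r = y # r'\<close> by simp
    then show ?thesis using Cons.prems by simp
  qed
qed

locale xfer =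
  fixes A :: "('q, 'g, 'd) mpda" and f :: "'q \<Rightarrow> nat" and h :: "'g \<Rightarrow> nat"
  assumes wf: "mpda_wf A" and injf: "inj_on f (states A)" and injh: "inj_on h (stack A)"
begin

definition F :: "'q \<times> 'g list \<Rightarrow> nat \<times> nat list" where
  "F c = (f (fst c), map h (snd c))"

definition B :: "(nat, nat, 'd) mpda" where
  "B = \<lparr> states = f ` states A, outputs = outputs A, stack = h ` stack A,
         trans = (\<lambda>(q, \<gamma>, \<gamma>', q'). (f q, map_option h \<gamma>, map_option h \<gamma>', f q')) ` trans A,
         out = out A \<circ> inv_into (states A) f, initial = f ` initial A, final = f ` final A \<rparr>"

lemma trA: "(q, \<gamma>, \<gamma>', q') \<in> trans A \<Longrightarrow> q \<in> states A \<and> q' \<in> states A \<and> set_option \<gamma> \<subseteq> stack A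
   \<and> set_option \<gamma>' \<subseteq> stack A \<and> \<not> (\<gamma> \<noteq> None \<and> \<gamma>' \<noteq> None)"
  using wf unfolding mpda_wf_def by fastforce

lemma B_wf: "mpda_wf B"
  unfolding mpda_wf_def
proof (intro conjI)
  show "finite (states B)" "finite (outputs B)" "finite (stack B)"
    using wf unfolding mpda_wf_def B_def by auto
  show "\<forall>(q, \<gamma>, \<gamma>', q')\<in>trans B. q \<in> states B \<and> q' \<in> states B \<and> set_option \<gamma> \<subseteq> stack B
          \<and> set_option \<gamma>' \<subseteq> stack B \<and> \<not> (\<gamma> \<noteq> None \<and> \<gamma>' \<noteq> None)"
  proof (rule ballI)
    fix t assume "t \<in> trans B"
    then obtain q \<gamma> \<gamma>' q' where t: "t = (f q, map_option h \<gamma>, map_option h \<gamma>', f q')" "(q, \<gamma>, \<gamma>', q') \<in> trans A"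
      unfolding B_def by auto
    show "case t of (q, \<gamma>, \<gamma>', q') \<Rightarrow> q \<in> states B \<and> q' \<in> states B \<and> set_option \<gamma> \<subseteq> stack B
          \<and> set_option \<gamma>' \<subseteq> stack B \<and> \<not> (\<gamma> \<noteq> None \<and> \<gamma>' \<noteq> None)"
      using trA[OF t(2)] t(1) by (auto simp: B_def)
  qed
  show "\<forall>q\<in>states B. out B q \<in> outputs B"
    using wf injf unfolding mpda_wf_def B_def by auto
  show "initial B \<subseteq> states B" "final B \<subseteq> states B"
    using wf unfolding mpda_wf_def B_def by auto
qed

lemma B_pop: "pop_normalized A \<Longrightarrow> pop_normalized B"
proof -
  assume "pop_normalized A"
  then obtain ret where ret: "\<forall>g \<in> stack A. ret g \<in> states A"
    "\<forall>q g q'. (q, Some g, None, q') \<in> trans A \<longrightarrow> q' = ret g"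
    unfolding pop_normalized_def by blast
  show ?thesis unfolding pop_normalized_def
  proof (intro exI[of _ "\<lambda>g. f (ret (inv_into (stack A) h g))"] conjI allI impI)
    show "\<forall>g\<in>stack B. f (ret (inv_into (stack A) h g)) \<in> states B"
      using ret(1) injh by (auto simp: B_def)
  next
    fix q g q'
    assume "(q, Some g, None, q') \<in> trans B"
    then obtain q0 \<gamma>0 \<gamma>0' q0' where x: "(q0, \<gamma>0, \<gamma>0', q0') \<in> trans A"
      "(q, Some g, None, q') = (f q0, map_option h \<gamma>0, map_option h \<gamma>0', f q0')"
      unfolding B_def by auto
    then obtain g0 where "\<gamma>0 = Some g0" "\<gamma>0' = None" "g = h g0" "q' = f q0'" by (cases \<gamma>0; cases \<gamma>0') auto
    then have "(q0, Some g0, None, q0') \<in> trans A" "g = h g0" "q' = f q0'" using x by auto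
    moreover then have "g0 \<in> stack A" using trA by fastforce
    ultimately show "q' = f (ret (inv_into (stack A) h g))" using ret(2) injh by auto
  qed
qed

lemma mv_fwd: "mpda_move A c c' \<Longrightarrow> mpda_move B (F c) (F c')"
proof -
  assume "mpda_move A c c'"
  then obtain \<gamma> \<gamma>' \<alpha> where h: "(fst c, \<gamma>, \<gamma>', fst c') \<in> trans A" "snd c = opt_list \<gamma> @ \<alpha>"
    "snd c' = opt_list \<gamma>' @ \<alpha>" "snd c \<noteq> []" unfolding mpda_move_def by blast
  have tB: "(f (fst c), map_option h \<gamma>, map_option h \<gamma>', f (fst c')) \<in> trans B"
    using h(1) unfolding B_def by force
  have mo: "map h (opt_list \<delta>) = opt_list (map_option h \<delta>)" for \<delta>
    by (cases \<delta>) (auto simp: opt_list_def)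
  show ?thesis unfolding mpda_move_def F_def
    apply (rule exI[of _ "map_option h \<gamma>"], rule exI[of _ "map_option h \<gamma>'"], rule exI[of _ "map h \<alpha>"])
    using h tB mo by (cases \<gamma>) (auto simp: opt_list_def)
qed

lemma mv_bwd: "mpda_move B (F c) c'' \<Longrightarrow> cfgok A c \<Longrightarrow> \<exists>c'. c'' = F c' \<and> mpda_move A c c'"
proof -
  assume mv: "mpda_move B (F c) c''" and ok: "cfgok A c"
  obtain q \<sigma> where c: "c = (q, \<sigma>)" by (cases c)
  from mv obtain \<gamma>B \<gamma>B' \<alpha>B where hB0: "(f q, \<gamma>B, \<gamma>B', fst c'') \<in> trans B" "map h \<sigma> = opt_list \<gamma>B @ \<alpha>B"
    "snd c'' = opt_list \<gamma>B' @ \<alpha>B" unfolding mpda_move_def F_def c by auto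
  have "\<sigma> \<noteq> []" using mv unfolding mpda_move_def F_def c by auto
  note hB = hB0 this
  from hB(1) obtain q0 \<gamma>0 \<gamma>0' q0' where t: "(q0, \<gamma>0, \<gamma>0', q0') \<in> trans A" "f q0 = f q"
    "\<gamma>B = map_option h \<gamma>0" "\<gamma>B' = map_option h \<gamma>0'" "fst c'' = f q0'"
    unfolding B_def by auto
  have "q0 \<in> states A" using trA[OF t(1)] by simp
  moreover have "q \<in> states A" using ok c unfolding cfgok_def by simp
  ultimately have "q0 = q" using t(2) injf by (meson inj_onD)
  have mo: "map h (opt_list \<delta>) = opt_list (map_option h \<delta>)" for \<delta>
    by (cases \<delta>) (auto simp: opt_list_def)
  obtain \<alpha> where \<alpha>: "\<sigma> = opt_list \<gamma>0 @ \<alpha>" "\<alpha>B = map h \<alpha>"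
  proof (cases \<gamma>0)
    case None
    then show ?thesis using that hB(2) t(3) by (simp add: opt_list_def)
  next
    case (Some g0)
    then obtain g1 \<sigma>' where \<sigma>: "\<sigma> = g1 # \<sigma>'" "h g1 = h g0" "\<alpha>B = map h \<sigma>'"
      using hB(2) t(3) by (cases \<sigma>) (auto simp: opt_list_def)
    have "g1 \<in> stack A" using ok c \<sigma> unfolding cfgok_def by auto
    moreover have "g0 \<in> stack A" using trA[OF t(1)] Some by auto
    ultimately have "g1 = g0" using \<sigma>(2) injh by (meson inj_onD)
    then show ?thesis using that \<sigma> Some by (simp add: opt_list_def)
  qed
  define c' where "c' = (q0', opt_list \<gamma>0' @ \<alpha>)"
  have "c'' = F c'" unfolding c'_def F_def using hB(3) t(4,5) \<alpha>(2) mo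
    by (cases c'') simp
  moreover have "mpda_move A c c'" unfolding mpda_move_def c'_def c
    using t(1) \<open>q0 = q\<close> \<alpha>(1) hB(4) by auto
  ultimately show ?thesis by blast
qed

lemma chain_fwd: "chain A cs \<Longrightarrow> chain B (map F cs)"
proof (induction cs)
  case Nil
  then show ?case by simp
next
  case (Cons x r)
  then show ?case by (cases r) (auto intro: mv_fwd)
qed

lemma chain_bwd: "chain B cs'' \<Longrightarrow> cs'' \<noteq> [] \<Longrightarrow> hd cs'' = F c0 \<Longrightarrow> cfgok A c0 \<Longrightarrow>
  \<exists>cs. chain A cs \<and> cs \<noteq> [] \<and> hd cs = c0 \<and> cs'' = map F cs"
proof (induction cs'' arbitrary: c0)
  case Nil
  then show ?case by simp
next
  case (Cons x r)
  show ?case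
  proof (cases r)
    case Nil
    then show ?thesis using Cons.prems by (intro exI[of _ "[c0]"]) simp
  next
    case (Cons y r')
    then have mv: "mpda_move B (F c0) y" and ch: "chain B r" using Cons.prems by auto
    from mv_bwd[OF mv Cons.prems(4)] obtain c' where c': "y = F c'" "mpda_move A c0 c'" by blast
    have "cfgok A c'" using move_cfgok[OF wf c'(2) Cons.prems(4)] .
    from Cons.IH[OF ch _ _ this] Cons c' obtain cs where
      cs: "chain A cs" "cs \<noteq> []" "hd cs = c'" "r = map F cs" by auto
    have "chain A (c0 # cs)" using cs c'(2) by (cases cs) auto
    then show ?thesis using cs Cons.prems(3) by (intro exI[of _ "c0 # cs"]) simp
  qed
qed

lemma B_lang: "mpda_lang B = mpda_lang A"
proof (intro set_eqI iffI)
  fix z assume "z \<in> mpda_lang B"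
  then obtain cs'' where r: "mpda_run B cs''" "z = map (out B \<circ> fst) cs''" unfolding mpda_lang_def by blast
  then have ch: "chain B cs''" "cs'' \<noteq> []" unfolding mpda_run_def chain_iff by auto
  from r(1) obtain q0 g where hd: "fst (hd cs'') = f q0" "q0 \<in> initial A" "snd (hd cs'') = [h g]" "g \<in> stack A"
    unfolding mpda_run_def B_def by auto
  have q0s: "q0 \<in> states A" using hd(2) wf unfolding mpda_wf_def by auto
  have ok0: "cfgok A (q0, [g])" using q0s hd(4) unfolding cfgok_def by simp
  have "hd cs'' = F (q0, [g])" using hd unfolding F_def by (cases "hd cs''") simp
  from chain_bwd[OF ch this ok0] obtain cs where cs: "chain A cs" "cs \<noteq> []" "hd cs = (q0, [g])" "cs'' = map F cs"
    by blast
  have allok: "\<forall>c \<in> set cs. cfgok A c" using chain_cfgok[OF wf cs(1,2)] cs(3) ok0 by simp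
  from r(1) obtain qf where lf: "fst (last cs'') = f qf" "qf \<in> final A" "snd (last cs'') = []"
    unfolding mpda_run_def B_def by auto
  have lcs: "last cs'' = F (last cs)" using cs(2,4) by (simp add: last_map)
  have "fst (last cs) \<in> states A" using allok cs(2) unfolding cfgok_def by simp
  moreover have "qf \<in> states A" using lf(2) wf unfolding mpda_wf_def by auto
  moreover have "f (fst (last cs)) = f qf" using lf(1) lcs unfolding F_def by simp
  ultimately have "fst (last cs) = qf" using injf by (meson inj_onD)
  then have "mpda_run A cs"
    unfolding mpda_run_def using cs lf lcs hd(2,4) chain_iff[of A cs] unfolding F_def by auto
  moreover have "z = map (out A \<circ> fst) cs"
    using r(2) cs(4) allok injf unfolding B_def F_def cfgok_def by (auto simp: inv_into_f_f)
  ultimately show "z \<in> mpda_lang A" unfolding mpda_lang_def by blast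
next
  fix z assume "z \<in> mpda_lang A"
  then obtain cs where r: "mpda_run A cs" "z = map (out A \<circ> fst) cs" unfolding mpda_lang_def by blast
  then have ch: "chain A cs" "cs \<noteq> []" unfolding mpda_run_def chain_iff by auto
  from r(1) obtain g where g: "fst (hd cs) \<in> initial A" "snd (hd cs) = [g]" "g \<in> stack A"
    unfolding mpda_run_def by auto
  have ok0: "cfgok A (hd cs)" using g wf unfolding cfgok_def mpda_wf_def by auto
  have allok: "\<forall>c \<in> set cs. cfgok A c" using chain_cfgok[OF wf ch ok0] .
  have "mpda_run B (map F cs)"
    unfolding mpda_run_def using r(1) ch g chain_fwd[OF ch(1)] chain_iff[of B "map F cs"]
    unfolding mpda_run_def B_def F_def by (auto simp: hd_map last_map)
  moreover have "z = map (out B \<circ> fst) (map F cs)"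
    using r(2) allok injf unfolding B_def F_def cfgok_def by (auto simp: inv_into_f_f)
  ultimately show "z \<in> mpda_lang B" unfolding mpda_lang_def by blast
qed

end

lemma transfer_nat:
  fixes A :: "('q, 'g, 'd) mpda"
  assumes wf: "mpda_wf A" and pn: "pop_normalized A"
  shows "\<exists>B :: (nat, nat, 'd) mpda. mpda_wf B \<and> pop_normalized B \<and> mpda_lang B = mpda_lang A"
proof -
  have "finite (states A)" "finite (stack A)" using wf unfolding mpda_wf_def by auto
  then obtain f :: "'q \<Rightarrow> nat" and h :: "'g \<Rightarrow> nat" where "inj_on f (states A)" "inj_on h (stack A)"
    using finite_imp_inj_to_nat_seg by metis
  then interpret xfer A f h using wf by unfold_locales auto
  show ?thesis using B_wf B_pop[OF pn] B_lang by blast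
qed



context ctx begin

lemma init_Qset: "(d, c, Some (Inl S, Inr c, [])) \<in> Qset" if "d \<in> \<Sigma>" "c \<in> \<Sigma>"
  using that unfolding Qset_def ItemsU_def SymU_def SufU_def by auto

lemma lang_Aut:
  assumes L: "L = {w. gen P [Inl S] w}" and LS: "L \<subseteq> lists \<Sigma>" and len: "\<forall>w\<in>L. 2 \<le> length w"
  shows "mpda_lang Aut = Next \<Sigma> tri L"
proof (intro set_eqI iffI)
  fix z assume "z \<in> mpda_lang Aut"
  then obtain cs where r: "mpda_run Aut cs" "z = map (out Aut \<circ> fst) cs" unfolding mpda_lang_def by blast
  then have ch: "chain Aut cs" "cs \<noteq> []" unfolding mpda_run_def chain_iff by auto
  from r(1) obtain d c1 g where hd: "fst (hd cs) = (d, c1, Some (Inl S, Inr c1, []))" "d \<in> \<Sigma>" "c1 \<in> \<Sigma>"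
    "snd (hd cs) = [g]" "g \<in> Qset"
    unfolding mpda_run_def Aut_def by auto
  have fl: "fst (last cs) \<in> final Aut" "snd (last cs) = []" using r(1) unfolding mpda_run_def by auto
  have p0: "fst (hd cs) \<in> Qset" using hd init_Qset by simp
  have sq: "set (snd (hd cs)) \<subseteq> Qset" using hd by simp
  from sound[OF ch p0 sq fl] have s:
    "Mlist P (obl (fst (hd cs)) @ obs (snd (hd cs))) (map (cur \<circ> fst) (tl cs))"
    "snd (snd g) = None"
    "map (outp \<circ> fst) cs = next_word tri (map (cur \<circ> fst) cs)"
    "set (map (cur \<circ> fst) cs) \<subseteq> \<Sigma>"
    using hd by auto
  define y where "y = map (cur \<circ> fst) (tl cs)"
  have "Mlist P [(Inl S, Inr c1, [])] y" using s(1) hd s(2) unfolding y_def by (simp add: obl_def obs_def)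
  then have "M P (Inl S, Inr c1, []) y" by auto
  then obtain u v where "y = u @ v" "gen P [] u" "lc P (Inl S) (Inr c1) v" unfolding M_def by auto
  then have "lc P (Inl S) (Inr c1) y" using gen_nil_D by fastforce
  from lc_gen[OF this, of "[c1]"] have g: "gen P [Inl S] (c1 # y)" using gen_tm_iff by fastforce
  have w: "map (cur \<circ> fst) cs = c1 # y"
    using ch(2) hd unfolding y_def by (cases cs) (auto simp: cur_def)
  have "z = next_word tri (c1 # y)" using r(2) s(3) w by (simp add: Aut_def)
  moreover have "c1 # y \<in> L" using g L by simp
  moreover have "c1 # y \<in> lists \<Sigma>" using s(4) w by (simp add: lists_eq_set)
  ultimately show "z \<in> Next \<Sigma> tri L" unfolding Next_def by blast
next
  fix z assume "z \<in> Next \<Sigma> tri L"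
  then obtain w where w: "z = next_word tri w" "w \<in> L" "w \<in> lists \<Sigma>" unfolding Next_def by blast
  then have "2 \<le> length w" using len by blast
  then obtain c1 c2 r where wr: "w = c1 # c2 # r" by (cases w; cases "tl w") auto
  have wS: "c1 \<in> \<Sigma>" "c2 \<in> \<Sigma>" "set r \<subseteq> \<Sigma>" using w(3) wr by auto
  have "gen P [Inl S] (c1 # c2 # r)" using w(2) wr L by simp
  then have lc0: "lc P (Inl S) (Inr c1) (c2 # r)" by (rule gen_lc)
  define O0 where "O0 = ((Inl S :: nat + 'a), (Inr c1 :: nat + 'a), ([] :: (nat + 'a) list))"
  have O0U: "O0 \<in> ItemsU" unfolding O0_def ItemsU_def SymU_def SufU_def using wS by auto
  have M0: "M P O0 (c2 # r)" unfolding M_def O0_def using lc0 gen_nil by fastforce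
  have "\<forall>(O', v') \<in> set [(O0, c2 # r)]. v' \<noteq> [] \<and> set v' \<subseteq> \<Sigma> \<and> M P O' v' \<and> O' \<in> ItemsU"
    using M0 O0U wS by simp
  from comp[OF refl wS(1) this] have EX: "\<exists>cs. chain Aut cs \<and> cs \<noteq> []
    \<and> hd cs = ((hd (c2 # r), c1, Some O0), stkof tri (last (c2 # r)) [])
    \<and> fst (last cs) \<in> final Aut \<and> snd (last cs) = []
    \<and> map (cur \<circ> fst) cs = c1 # concat (map snd [(O0, c2 # r)])" .
  then obtain cs where cs0: "chain Aut cs" "cs \<noteq> []"
    "hd cs = ((hd (c2 # r), c1, Some O0), stkof tri (last (c2 # r)) [])"
    "fst (last cs) \<in> final Aut" "snd (last cs) = []"
    "map (cur \<circ> fst) cs = c1 # concat (map snd [(O0, c2 # r)])"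
    by (elim exE conjE) (erule that; assumption)
  have cs: "chain Aut cs" "cs \<noteq> []"
    "hd cs = ((c2, c1, Some O0), [(tri, last (c2 # r), None)])"
    "fst (last cs) \<in> final Aut" "snd (last cs) = []"
    "map (cur \<circ> fst) cs = c1 # c2 # r"
    using cs0 by simp_all
  have lS: "last (c2 # r) \<in> \<Sigma>" using wS by (cases r) auto
  have gQ: "(tri, last (c2 # r), None) \<in> Qset" using lS unfolding Qset_def by simp
  have p0: "fst (hd cs) \<in> Qset" using cs(3) init_Qset wS unfolding O0_def by simp
  have sq: "set (snd (hd cs)) \<subseteq> Qset" using cs(3) gQ by simp
  have "mpda_run Aut cs" unfolding mpda_run_def
    using cs wS gQ chain_iff[of Aut cs] unfolding Aut_def O0_def by auto
  moreover have "map (outp \<circ> fst) cs = next_word tri (map (cur \<circ> fst) cs)"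
    using sound[OF cs(1,2) p0 sq cs(4,5)] by blast
  then have "z = map (out Aut \<circ> fst) cs" using w(1) wr cs(6) by (simp add: Aut_def)
  ultimately show "z \<in> mpda_lang Aut" unfolding mpda_lang_def by blast
qed

end

theorem corollary3p5:
  fixes \<Sigma> :: "'a set" and tri :: 'a and L :: "'a list set"
  assumes "finite \<Sigma>"
    and "tri \<notin> \<Sigma>"
    and "L \<subseteq> lists \<Sigma>"
    and "context_free \<Sigma> L"
    and "\<forall>w \<in> L. 2 \<le> length w"
  shows "\<exists>A :: (nat, nat, 'a \<times> 'a) mpda. mpda_wf A \<and> pop_normalized A
           \<and> mpda_lang A = Next \<Sigma> tri L"
proof -
  from assms(4) obtain P S where PS: "finite P" "L = cfg_lang P S"
    unfolding context_free_def by blast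
  interpret ctx P S \<Sigma> tri using PS(1) assms(1,2) by unfold_locales
  have "mpda_lang Aut = Next \<Sigma> tri L"
    by (rule lang_Aut) (use PS(2) cfg_lang_gen assms(3,5) in auto)
  with transfer_nat[OF Aut_wf Aut_pop] show ?thesis by metis
qed

end
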